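(* Let $N$ be a positive integer and let the edges of the complete $4$-uniform hypergraph $\mathcal{K}^4_N$ be colored red and blue. Let $\mathcal{P}=e_1e_2\ldots e_n$ be a red loose path which is maximal with respect to a set $W\subseteq V(\mathcal{K}^4_N)\setminus V(\mathcal{P})$ with $|W|\ge 4$. Then for every two consecutive edges $e_j,e_{j+1}$ of $\mathcal{P}$ there exist distinct vertices $x,y\in W$ and distinct vertices $a_1,\dots,a_5\in e_j\cup e_{j+1}$ such that the edges $f=\{x,a_1,a_2,a_3\}$ and $g=\{a_3,a_4,a_5,y\}$ are both blue (so $fg$ is a blue loose path with two edges), and at least one vertex of $e_{j+1}\setminus e_j$ does not belong to $S=\{a_1,\dots,a_5\}$. Moreover, there are subsets $W_1,W_2\subseteq W$ with $|W_1|\ge |W|-2$ and $|W_2|\ge |W|-3$ such that for all distinct $x'\in W_1$ and $y'\in W_2$ the edges $(f\setminus\{x\})\cup\{x'\}$ and $(g\setminus\{y\})\cup\{y'\}$ are both blue.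
   Context: A $4$-uniform loose path $\mathcal{P}=e_1e_2\ldots e_n$ (a copy of $\mathcal{P}^4_n$) has vertex set $\{v_1,\dots,v_{3n+1}\}$ and edges $e_i=\{v_{3i-2},v_{3i-1},v_{3i},v_{3i+1}\}$, $1\le i\le n$; the first vertex of $e_i$ is $f_{\mathcal{P},e_i}=v_{3i-2}$ and its last vertex is $l_{\mathcal{P},e_i}=v_{3i+1}$. A red path is one all of whose edges are red; $\|\mathcal{P}\|$ denotes the number of edges. A red path $\mathcal{P}=e_1\ldots e_n$ is maximal with respect to $W\subseteq V\setminus V(\mathcal{P})$ if there is no $W'\subseteq W$, no $1\le r\le n$ and no $1\le i\le n-r+1$ such that $\mathcal{P}'=e_1\ldots e_{i-1}e'_ie'_{i+1}\ldots e'_{i+r}e_{i+r}\ldots e_n$ (the edges $e_i,\dots,e_{i+r-1}$ replaced by $r+1$ new edges $e'_i,\dots,e'_{i+r}$) is a red loose path with $n+1$ edges satisfying: (i) $V(\mathcal{P}')=V(\mathcal{P})\cup W'$; (ii) if $i=1$ then $f_{\mathcal{P}',e'_i}=f_{\mathcal{P},e_i}$; (iii) if $i+r-1=n$ then $l_{\mathcal{P}',e'_{i+r}}=l_{\mathcal{P},e_n}$. *)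

theory Defs
  imports Main
begin

text \<open>A 4-uniform loose path with n edges is represented by its vertex list
  vs = [v_1, ..., v_{3n+1}] (0-based in Isabelle). The colouring of the complete
  4-uniform hypergraph on V is given by the predicate red (blue = not red).\<close>

definition lp_edge :: "'a list \<Rightarrow> nat \<Rightarrow> 'a set" where
  "lp_edge vs i = {vs ! k | k. 3 * (i - 1) \<le> k \<and> k \<le> 3 * i}"

definition loose_path :: "'a set \<Rightarrow> 'a list \<Rightarrow> nat \<Rightarrow> bool" where
  "loose_path V vs n \<longleftrightarrow> length vs = 3 * n + 1 \<and> distinct vs \<and> set vs \<subseteq> V"

definition red_path :: "('a set \<Rightarrow> bool) \<Rightarrow> 'a list \<Rightarrow> nat \<Rightarrow> bool" where
  "red_path red vs n \<longleftrightarrow> (\<forall>i. 1 \<le> i \<and> i \<le> n \<longrightarrow> red (lp_edge vs i))"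

text \<open>Maximality of the red path vs (with n edges) with respect to W.
  The new path ws has n+1 edges: edges 1..i-1 are e_1..e_{i-1},
  edges i..i+r are new, and edge k (i+r < k \<le> n+1) is e_{k-1}.\<close>

definition maximal_wrt ::
  "'a set \<Rightarrow> ('a set \<Rightarrow> bool) \<Rightarrow> 'a list \<Rightarrow> nat \<Rightarrow> 'a set \<Rightarrow> bool" where
  "maximal_wrt V red vs n W \<longleftrightarrow>
     \<not> (\<exists>W' ws r i. W' \<subseteq> W \<and> 1 \<le> r \<and> r \<le> n \<and> 1 \<le> i \<and> i \<le> n - r + 1 \<and>
          loose_path V ws (n + 1) \<and> red_path red ws (n + 1) \<and>
          (\<forall>k. 1 \<le> k \<and> k < i \<longrightarrow> lp_edge ws k = lp_edge vs k) \<and>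
          (\<forall>k. i + r < k \<and> k \<le> n + 1 \<longrightarrow> lp_edge ws k = lp_edge vs (k - 1)) \<and>
          set ws = set vs \<union> W' \<and>
          (i = 1 \<longrightarrow> ws ! 0 = vs ! 0) \<and>
          (i + r - 1 = n \<longrightarrow> ws ! (3 * (n + 1)) = vs ! (3 * n)))"

end

theory Submission
  imports Defs
begin


definition sm :: "'a set \<Rightarrow> ('a set \<Rightarrow> bool) \<Rightarrow> 'a set \<Rightarrow> bool" where
  "sm W red X \<longleftrightarrow> card {w\<in>W. red (insert w X)} \<le> 2"

lemma lp_edge_img: "lp_edge xs i = (\<lambda>k. xs!k) ` {3*(i-1)..3*i}"
  unfolding lp_edge_def by auto

lemma lp_edge4: assumes "1 \<le> i"
  shows "lp_edge xs i = {xs!(3*(i-1)), xs!(3*(i-1)+1), xs!(3*(i-1)+2), xs!(3*(i-1)+3)}"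
proof -
  have "{3*(i-1)..3*i} = {3*(i-1), 3*(i-1)+1, 3*(i-1)+2, 3*(i-1)+3}"
    using assms by auto
  then show ?thesis unfolding lp_edge_img by simp
qed

lemma ne_card: "0 < card A \<Longrightarrow> \<exists>x. x \<in> A"
  by (cases "A = {}") auto

lemma sdr:
  assumes "finite X" "finite Y" "finite Z" "3 \<le> card X" "3 \<le> card Y" "3 \<le> card Z"
  shows "\<exists>a\<in>X. \<exists>b\<in>Y. \<exists>c\<in>Z. distinct [a,b,c]"
proof -
  have "0 < card X" using assms by simp
  then obtain a where a: "a \<in> X" using ne_card by blast
  have "card Y - card {a} \<le> card (Y - {a})" by (rule diff_card_le_card_Diff) simp
  then have "0 < card (Y - {a})" using assms by simp
  then obtain b where b: "b \<in> Y - {a}" using ne_card by blast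
  have "card Z - card {a,b} \<le> card (Z - {a,b})" by (rule diff_card_le_card_Diff) simp
  moreover have "card {a,b} \<le> 2" by (simp add: card_insert_if)
  ultimately have "0 < card (Z - {a,b})" using assms by linarith
  then obtain c where c: "c \<in> Z - {a,b}" using ne_card by blast
  show ?thesis
    by (rule bexI[of _ a], rule bexI[of _ b], rule bexI[of _ c]) (use a b c in auto)
qed

lemma good:
  assumes Wf: "finite W" and W4: "4 \<le> card W" and Wd: "W \<inter> SS = {}"
    and aS: "{bA,bB,bC,bD,bE} \<subseteq> SS" and d: "distinct [bA,bB,bC,bD,bE]"
    and aE: "{bA,bB,bC,bD,bE} \<subseteq> E" and vF: "v \<in> F" and vn: "v \<notin> {bA,bB,bC,bD,bE}"
    and A: "A = {bA,bB,bC}" and B: "B = {bC,bD,bE}"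
    and sA: "sm W red A" and sB: "sm W red B"
  shows "\<exists>x y a1 a2 a3 a4 a5.
       x \<in> W \<and> y \<in> W \<and> x \<noteq> y \<and> distinct [a1, a2, a3, a4, a5] \<and>
       {a1, a2, a3, a4, a5} \<subseteq> E \<and>
       \<not> red {x, a1, a2, a3} \<and> \<not> red {a3, a4, a5, y} \<and>
       (\<exists>v \<in> F. v \<notin> {a1, a2, a3, a4, a5}) \<and>
       (\<exists>W1 W2. W1 \<subseteq> W \<and> W2 \<subseteq> W \<and> card W1 \<ge> card W - 2 \<and> card W2 \<ge> card W - 3 \<and>
          (\<forall>x' \<in> W1. \<forall>y' \<in> W2. x' \<noteq> y' \<longrightarrow>
              \<not> red (({x, a1, a2, a3} - {x}) \<union> {x'}) \<and>
              \<not> red (({a3, a4, a5, y} - {y}) \<union> {y'})))"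
proof -
  define RA where "RA = {w\<in>W. red (insert w A)}"
  define RB where "RB = {w\<in>W. red (insert w B)}"
  define W1 where "W1 = W - RA"
  define W2 where "W2 = W - RB"
  have cA: "card RA \<le> 2" using sA unfolding sm_def RA_def .
  have cB: "card RB \<le> 2" using sB unfolding sm_def RB_def .
  have c1: "card W1 = card W - card RA" unfolding W1_def
    by (rule card_Diff_subset) (use Wf in \<open>auto simp: RA_def\<close>)
  have c2: "card W2 = card W - card RB" unfolding W2_def
    by (rule card_Diff_subset) (use Wf in \<open>auto simp: RB_def\<close>)
  have g1: "card W1 \<ge> card W - 2" using c1 cA by linarith
  have g2: "card W2 \<ge> card W - 3" using c2 cB by linarith
  have "card W2 \<ge> 2" using c2 cB W4 by linarith
  then obtain y where y: "y \<in> W2" using ne_card[of "W2"] by force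
  have "card W1 - card {y} \<le> card (W1 - {y})" by (rule diff_card_le_card_Diff) simp
  then have "card (W1 - {y}) \<ge> 1" using c1 cA W4 by simp
  then obtain x where x: "x \<in> W1" "x \<noteq> y" using ne_card[of "W1 - {y}"] by force
  have xW: "x \<in> W" "y \<in> W" using x y by (auto simp: W1_def W2_def)
  have xn: "x \<notin> {bA,bB,bC}" "y \<notin> {bC,bD,bE}" using xW Wd aS by auto
  have e1: "\<And>x'. ({x, bA, bB, bC} - {x}) \<union> {x'} = insert x' A" using xn A by auto
  have e2: "\<And>y'. ({bC, bD, bE, y} - {y}) \<union> {y'} = insert y' B" using xn B by auto
  have f1: "\<And>x'. x' \<in> W1 \<Longrightarrow> \<not> red (insert x' A)" by (auto simp: W1_def RA_def)
  have f2: "\<And>y'. y' \<in> W2 \<Longrightarrow> \<not> red (insert y' B)" by (auto simp: W2_def RB_def)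
  have r1: "\<not> red {x, bA, bB, bC}" using f1[OF x(1)] A by simp
  have r2: "\<not> red {bC, bD, bE, y}" using f2[OF y] B by (simp add: insert_commute)
  have bl: "\<forall>x' \<in> W1. \<forall>y' \<in> W2. x' \<noteq> y' \<longrightarrow>
              \<not> red (({x, bA, bB, bC} - {x}) \<union> {x'}) \<and>
              \<not> red (({bC, bD, bE, y} - {y}) \<union> {y'})"
    unfolding e1 e2 using f1 f2 by blast
  have sub: "W1 \<subseteq> W" "W2 \<subseteq> W" by (auto simp: W1_def W2_def)
  have vv: "\<exists>v \<in> F. v \<notin> {bA, bB, bC, bD, bE}" using vF vn by blast
  have ex: "\<exists>W1 W2. W1 \<subseteq> W \<and> W2 \<subseteq> W \<and> card W1 \<ge> card W - 2 \<and> card W2 \<ge> card W - 3 \<and>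
          (\<forall>x' \<in> W1. \<forall>y' \<in> W2. x' \<noteq> y' \<longrightarrow>
              \<not> red (({x, bA, bB, bC} - {x}) \<union> {x'}) \<and>
              \<not> red (({bC, bD, bE, y} - {y}) \<union> {y'}))"
    apply (rule exI[of _ W1], rule exI[of _ W2])
    apply (insert sub g1 g2 bl)
    apply (intro conjI)
    apply assumption+
    done
  show ?thesis
    apply (rule exI[of _ x], rule exI[of _ y], rule exI[of _ bA], rule exI[of _ bB],
        rule exI[of _ bC], rule exI[of _ bD], rule exI[of _ bE])
    apply (insert xW x(2) d aE r1 r2 vv ex)
    apply (intro conjI)
    apply assumption+
    done
qed



lemma shift3: "3 \<le> a \<Longrightarrow> a \<le> c \<Longrightarrow> (\<lambda>i. i - 3) ` {a..c::nat} = {a-3..c-3}"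
  apply (rule equalityI)
   apply auto[1]
  apply (rule subsetI)
  apply (rule_tac x="x+3" in image_eqI)
  by auto

lemma chain_false:
  fixes u :: "nat \<Rightarrow> 'a"
  assumes len: "length vs = 3*n+1" and dist: "distinct vs" and sub: "set vs \<subseteq> V"
    and rp: "red_path red vs n" and WV: "W \<subseteq> V - set vs" and mx: "maximal_wrt V red vs n W"
    and j1: "1 \<le> j" and jn: "j < n"
    and u: "\<And>k. u k = vs ! (3*(j-1)+k)"
    and pd: "distinct [0,pa,pb,pc,pd,pe,6::nat]" and ps: "set [0,pa,pb,pc,pd,pe,6] = {0..<7}"
    and zW: "z1 \<in> W" "z2 \<in> W" "z3 \<in> W" and zd: "distinct [z1,z2,z3]"
    and r1: "red (insert z1 {u 0, u pa, u pb})"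
    and r2: "red (insert z2 {u pb, u pc, u pd})"
    and r3: "red (insert z3 {u pd, u pe, u 6})"
  shows False
proof -
  define b where "b = 3*(j-1)"
  define mid where "mid = [u 0, u pa, z1, u pb, u pc, z2, u pd, u pe, z3, u 6]"
  define pre where "pre = take b vs"
  define post where "post = drop (b+7) vs"
  define ws where "ws = pre @ mid @ post"
  have b7: "b + 7 \<le> length vs" using len j1 jn by (simp add: b_def)
  have lpre: "length pre = b" using b7 by (simp add: pre_def)
  have lpost: "length post = 3*n+1 - (b+7)" using len by (simp add: post_def)
  have lws: "length ws = 3*(n+1)+1" using lpre lpost b7 len by (simp add: ws_def mid_def)
  have dec: "vs = pre @ map u [0..<7] @ post"
  proof -
    have t: "take 7 (drop b vs) = map u [0..<7]"
      by (rule nth_equalityI) (use b7 in \<open>auto simp: u b_def\<close>)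
    have e: "drop 7 (drop b vs) = post" unfolding post_def by (simp add: add.commute)
    have "vs = take b vs @ take 7 (drop b vs) @ drop 7 (drop b vs)" by (simp only: append_take_drop_id)
    then show ?thesis unfolding t e pre_def .
  qed
  have D: "distinct (pre @ map u [0..<7] @ post)" using dist dec by simp
  have inj: "inj_on u {0..<7}" using D distinct_map by fastforce
  have lu: "map u [0,pa,pb,pc,pd,pe,6] = [u 0, u pa, u pb, u pc, u pd, u pe, u 6]" by simp
  have setu: "set [u 0, u pa, u pb, u pc, u pd, u pe, u 6] = u ` {0..<7}"
    by (simp only: lu[symmetric] set_map ps)
  have dmu: "distinct [u 0, u pa, u pb, u pc, u pd, u pe, u 6]"
    unfolding lu[symmetric] distinct_map using pd inj ps by simp
  have uvs: "u ` {0..<7} \<subseteq> set vs" using dec by (metis Un_iff set_append set_map set_upt subsetI)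
  have zout: "z1 \<notin> set vs" "z2 \<notin> set vs" "z3 \<notin> set vs" using zW WV by auto
  have zu: "{z1,z2,z3} \<inter> set [u 0, u pa, u pb, u pc, u pd, u pe, u 6] = {}"
    using zout uvs setu by auto
  have dmid: "distinct mid" using dmu zd zu by (auto simp: mid_def)
  have smid: "set mid = u ` {0..<7} \<union> {z1,z2,z3}"
    using setu by (auto simp: mid_def)
  have dws: "distinct ws"
    using D dmid smid zout dec by (auto simp: ws_def)
  have setws: "set ws = set vs \<union> {z1,z2,z3}"
    using smid dec by (auto simp: ws_def)
  have sws: "set ws \<subseteq> V" using setws sub zW WV by auto
  have lmid: "length mid = 10" by (simp add: mid_def)
  have nmid: "\<And>k. k < 10 \<Longrightarrow> ws!(b+k) = mid!k" by (simp add: ws_def nth_append lpre lmid)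
  have npre: "\<And>i. i \<le> b \<Longrightarrow> ws!i = vs!i"
  proof -
    fix i assume i: "i \<le> b"
    show "ws!i = vs!i"
    proof (cases "i < b")
      case True
      then have "ws!i = pre!i" by (simp add: ws_def nth_append lpre)
      then show ?thesis using True by (simp add: pre_def)
    next
      case False then have "i = b" using i by simp
      then show ?thesis using nmid[of 0] by (simp add: mid_def u b_def)
    qed
  qed
  have npost: "\<And>i. b+9 \<le> i \<Longrightarrow> i < length ws \<Longrightarrow> ws!i = vs!(i-3)"
  proof -
    fix i assume i: "b+9 \<le> i" "i < length ws"
    show "ws!i = vs!(i-3)"
    proof (cases "i = b+9")
      case True then show ?thesis using nmid[of 9] by (simp add: mid_def u b_def add.commute)
    next
      case False
      define m where "m = i - (b+10)"
      have ie: "i = b + 10 + m" using i False by (simp add: m_def)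
      have "ws!i = post!m" unfolding ie by (simp add: ws_def nth_append lpre lmid)
      also have "\<dots> = vs!(b+7+m)" unfolding post_def using b7 by (rule nth_drop)
      also have "b+7+m = i-3" using ie by simp
      finally show ?thesis .
    qed
  qed
  have jb0: "3*(j-1) = b" by (simp add: b_def)
  have jb1: "3*(j+1-1) = b+3" using j1 by (simp add: b_def)
  have jb2: "3*(j+2-1) = b+6" using j1 by (simp add: b_def)
  have ej: "lp_edge ws j = insert z1 {u 0, u pa, u pb}"
    using nmid[of 1] nmid[of 2] nmid[of 3] npre[of b]
    by (auto simp: lp_edge4[OF j1] jb0 mid_def u b_def)
  have ej1: "lp_edge ws (j+1) = insert z2 {u pb, u pc, u pd}"
    using nmid[of 3] nmid[of 4] nmid[of 5] nmid[of 6]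
  proof -
    have L: "lp_edge ws (j+1) = {ws!(b+3), ws!(b+4), ws!(b+5), ws!(b+6)}"
      using lp_edge4[of "j+1" ws] jb1 by (simp add: add.commute add.left_commute)
    show ?thesis unfolding L using nmid[of 3] nmid[of 4] nmid[of 5] nmid[of 6]
      by (auto simp: mid_def)
  qed
  have ej2: "lp_edge ws (j+2) = insert z3 {u pd, u pe, u 6}"
    using nmid[of 6] nmid[of 7] nmid[of 8] nmid[of 9]
  proof -
    have L: "lp_edge ws (j+2) = {ws!(b+6), ws!(b+7), ws!(b+8), ws!(b+9)}"
      using lp_edge4[of "j+2" ws] jb2 by (simp add: add.commute add.left_commute)
    show ?thesis unfolding L using nmid[of 6] nmid[of 7] nmid[of 8] nmid[of 9]
      by (auto simp: mid_def)
  qed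
  have eb: "\<And>k. 1 \<le> k \<Longrightarrow> k < j \<Longrightarrow> lp_edge ws k = lp_edge vs k"
  proof -
    fix k assume k: "1 \<le> k" "k < j"
    have "\<And>i. i \<in> {3*(k-1)..3*k} \<Longrightarrow> ws!i = vs!i"
      using k by (intro npre) (auto simp: b_def)
    then show "lp_edge ws k = lp_edge vs k" unfolding lp_edge_img by (rule image_cong[OF refl])
  qed
  have ea: "\<And>k. j+2 < k \<Longrightarrow> k \<le> n+1 \<Longrightarrow> lp_edge ws k = lp_edge vs (k-1)"
  proof -
    fix k assume k: "j+2 < k" "k \<le> n+1"
    have "\<And>i. i \<in> {3*(k-1)..3*k} \<Longrightarrow> ws!i = vs!(i-3)"
      using k j1 lws by (intro npost) (auto simp: b_def)
    then have "lp_edge ws k = (\<lambda>i. vs!(i-3)) ` {3*(k-1)..3*k}"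
      unfolding lp_edge_img by (rule image_cong[OF refl])
    also have "\<dots> = (\<lambda>i. vs!i) ` ((\<lambda>i. i-3) ` {3*(k-1)..3*k})" by (simp add: image_image)
    also have "(\<lambda>i. i-3) ` {3*(k-1)..3*k} = {3*(k-1)-3..3*k-3}" using k by (intro shift3) auto
    also have "{3*(k-1)-3..3*k-3} = {3*(k-1-1)..3*(k-1)}" using k by (simp add: algebra_simps)
    finally show "lp_edge ws k = lp_edge vs (k-1)" unfolding lp_edge_img .
  qed
  have rws: "red_path red ws (n+1)"
    unfolding red_path_def
  proof (intro allI impI)
    fix k assume k: "1 \<le> k \<and> k \<le> n+1"
    consider "k < j" | "k = j" | "k = j+1" | "k = j+2" | "j+2 < k" by linarith
    then show "red (lp_edge ws k)"
    proof cases
      case 1 then show ?thesis using k eb rp jn unfolding red_path_def by simp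
    next
      case 2 then show ?thesis using ej r1 by simp
    next
      case 3 then show ?thesis using ej1 r2 by simp
    next
      case 4 then show ?thesis using ej2 r3 by simp
    next
      case 5
      then have "lp_edge ws k = lp_edge vs (k-1)" using k ea by simp
      moreover have "1 \<le> k - 1 \<and> k - 1 \<le> n" using 5 k by linarith
      ultimately show ?thesis using rp unfolding red_path_def by simp
    qed
  qed
  have lp: "loose_path V ws (n+1)" unfolding loose_path_def using lws dws sws by simp
  have w0: "j = 1 \<longrightarrow> ws ! 0 = vs ! 0" using npre[of 0] by simp
  have wl: "j + 2 - 1 = n \<longrightarrow> ws ! (3 * (n + 1)) = vs ! (3 * n)"
  proof
    assume "j + 2 - 1 = n"
    then have "3*(n+1) = b+9" using j1 by (simp add: b_def)
    then show "ws ! (3 * (n + 1)) = vs ! (3 * n)" using npost[of "3*(n+1)"] lws by simp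
  qed
  have "\<exists>W' ws r i. W' \<subseteq> W \<and> 1 \<le> r \<and> r \<le> n \<and> 1 \<le> i \<and> i \<le> n - r + 1 \<and>
          loose_path V ws (n + 1) \<and> red_path red ws (n + 1) \<and>
          (\<forall>k. 1 \<le> k \<and> k < i \<longrightarrow> lp_edge ws k = lp_edge vs k) \<and>
          (\<forall>k. i + r < k \<and> k \<le> n + 1 \<longrightarrow> lp_edge ws k = lp_edge vs (k - 1)) \<and>
          set ws = set vs \<union> W' \<and>
          (i = 1 \<longrightarrow> ws ! 0 = vs ! 0) \<and>
          (i + r - 1 = n \<longrightarrow> ws ! (3 * (n + 1)) = vs ! (3 * n))"
    apply (rule exI[of _ "{z1,z2,z3}"], rule exI[of _ ws], rule exI[of _ 2], rule exI[of _ j])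
    using zW j1 jn lp rws eb ea setws w0 wl by auto
  then show False using mx unfolding maximal_wrt_def by blast
qed



lemma chain_small:
  fixes u :: "nat \<Rightarrow> 'a"
  assumes len: "length vs = 3*n+1" and dist: "distinct vs" and sub: "set vs \<subseteq> V"
    and rp: "red_path red vs n" and WV: "W \<subseteq> V - set vs" and mx: "maximal_wrt V red vs n W"
    and j1: "1 \<le> j" and jn: "j < n"
    and u: "\<And>k. u k = vs ! (3*(j-1)+k)"
    and pd: "distinct [0,pa,pb,pc,pd,pe,6::nat]" and ps: "set [0,pa,pb,pc,pd,pe,6] = {0..<7}"
    and Wf: "finite W"
  shows "sm W red {u 0, u pa, u pb} \<or> sm W red {u pb, u pc, u pd} \<or> sm W red {u pd, u pe, u 6}"
proof (rule ccontr)
  assume "\<not> ?thesis"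
  then have c: "3 \<le> card {w\<in>W. red (insert w {u 0, u pa, u pb})}"
      "3 \<le> card {w\<in>W. red (insert w {u pb, u pc, u pd})}"
      "3 \<le> card {w\<in>W. red (insert w {u pd, u pe, u 6})}"
    unfolding sm_def by auto
  obtain z1 z2 z3 where z: "z1 \<in> {w\<in>W. red (insert w {u 0, u pa, u pb})}"
      "z2 \<in> {w\<in>W. red (insert w {u pb, u pc, u pd})}"
      "z3 \<in> {w\<in>W. red (insert w {u pd, u pe, u 6})}" "distinct [z1,z2,z3]"
    using sdr[OF _ _ _ c] Wf by auto
  show False
    by (rule chain_false[OF len dist sub rp WV mx j1 jn u pd ps, of z1 z2 z3]) (use z in auto)
qed

lemma main_j:
  fixes V :: "'a set" and n :: nat and red :: "'a set \<Rightarrow> bool"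
    and vs :: "'a list" and W :: "'a set"
  assumes Vf: "finite V"
    and lpath: "loose_path V vs n" and rp: "red_path red vs n"
    and WV: "W \<subseteq> V - set vs" and W4: "card W \<ge> 4"
    and mx: "maximal_wrt V red vs n W" and j1: "1 \<le> j" and jn: "j < n"
  shows "\<exists>x y a1 a2 a3 a4 a5.
       x \<in> W \<and> y \<in> W \<and> x \<noteq> y \<and> distinct [a1, a2, a3, a4, a5] \<and>
       {a1, a2, a3, a4, a5} \<subseteq> lp_edge vs j \<union> lp_edge vs (j + 1) \<and>
       \<not> red {x, a1, a2, a3} \<and> \<not> red {a3, a4, a5, y} \<and>
       (\<exists>v \<in> lp_edge vs (j + 1) - lp_edge vs j. v \<notin> {a1, a2, a3, a4, a5}) \<and>
       (\<exists>W1 W2. W1 \<subseteq> W \<and> W2 \<subseteq> W \<and> card W1 \<ge> card W - 2 \<and> card W2 \<ge> card W - 3 \<and>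
          (\<forall>x' \<in> W1. \<forall>y' \<in> W2. x' \<noteq> y' \<longrightarrow>
              \<not> red (({x, a1, a2, a3} - {x}) \<union> {x'}) \<and>
              \<not> red (({a3, a4, a5, y} - {y}) \<union> {y'})))"
proof -
  have len: "length vs = 3*n+1" and dist: "distinct vs" and sub: "set vs \<subseteq> V"
    using lpath unfolding loose_path_def by auto
  have Wf: "finite W" using WV Vf finite_subset by blast
  have Wd: "W \<inter> set vs = {}" using WV by blast
  define u where "u = (\<lambda>k. vs ! (3*(j-1)+k))"
  have uu: "\<And>k. u k = vs ! (3*(j-1)+k)" by (simp add: u_def)
  have lt: "\<And>k. k \<le> 6 \<Longrightarrow> 3*(j-1)+k < length vs" using len j1 jn by simp
  have uset: "\<And>k. k \<le> 6 \<Longrightarrow> u k \<in> set vs" using lt by (simp add: uu)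
  have uinj: "\<And>a b. a \<le> 6 \<Longrightarrow> b \<le> 6 \<Longrightarrow> (u a = u b) = (a = b)"
    using lt dist by (simp add: uu nth_eq_iff_index_eq)
  have hE: "lp_edge vs j = {u 0, u 1, u 2, u 3}"
    using lp_edge4[OF j1, of vs] by (simp add: uu)
  have hF: "lp_edge vs (j+1) = {u 3, u 4, u 5, u 6}"
  proof -
    have "3*(j+1-1) = 3*(j-1)+3" using j1 by simp
    then show ?thesis using lp_edge4[of "j+1" vs] by (simp add: uu add.commute add.left_commute)
  qed
  have hFs: "lp_edge vs (Suc j) = {u 3, u 4, u 5, u 6}" using hF by simp
  have q0: "sm W red {u 0, u 1, u 2} \<Longrightarrow> sm W red {u 0, u 4, u 3} \<Longrightarrow> ?thesis"
    apply (rule good[where W=W and SS="set vs" and bA="u 1" and bB="u 2" and bC="u 0" and bD="u 3" and bE="u 4"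
       and v="u 5" and A="{u 0, u 1, u 2}" and B="{u 0, u 4, u 3}"])
    using Wf W4 Wd uset by (auto simp: hE hF hFs uinj)
  have q1: "sm W red {u 0, u 1, u 2} \<Longrightarrow> sm W red {u 3, u 5, u 1} \<Longrightarrow> ?thesis"
    apply (rule good[where W=W and SS="set vs" and bA="u 0" and bB="u 2" and bC="u 1" and bD="u 3" and bE="u 5"
       and v="u 4" and A="{u 0, u 1, u 2}" and B="{u 3, u 5, u 1}"])
    using Wf W4 Wd uset by (auto simp: hE hF hFs uinj)
  have q2: "sm W red {u 0, u 1, u 5} \<Longrightarrow> sm W red {u 1, u 2, u 6} \<Longrightarrow> ?thesis"
    apply (rule good[where W=W and SS="set vs" and bA="u 0" and bB="u 5" and bC="u 1" and bD="u 2" and bE="u 6"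
       and v="u 4" and A="{u 0, u 1, u 5}" and B="{u 1, u 2, u 6}"])
    using Wf W4 Wd uset by (auto simp: hE hF hFs uinj)
  have q3: "sm W red {u 0, u 1, u 2} \<Longrightarrow> sm W red {u 5, u 4, u 2} \<Longrightarrow> ?thesis"
    apply (rule good[where W=W and SS="set vs" and bA="u 0" and bB="u 1" and bC="u 2" and bD="u 4" and bE="u 5"
       and v="u 6" and A="{u 0, u 1, u 2}" and B="{u 5, u 4, u 2}"])
    using Wf W4 Wd uset by (auto simp: hE hF hFs uinj)
  have q4: "sm W red {u 0, u 1, u 2} \<Longrightarrow> sm W red {u 2, u 3, u 6} \<Longrightarrow> ?thesis"
    apply (rule good[where W=W and SS="set vs" and bA="u 0" and bB="u 1" and bC="u 2" and bD="u 3" and bE="u 6"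
       and v="u 4" and A="{u 0, u 1, u 2}" and B="{u 2, u 3, u 6}"])
    using Wf W4 Wd uset by (auto simp: hE hF hFs uinj)
  have q5: "sm W red {u 0, u 1, u 5} \<Longrightarrow> sm W red {u 0, u 4, u 3} \<Longrightarrow> ?thesis"
    apply (rule good[where W=W and SS="set vs" and bA="u 1" and bB="u 5" and bC="u 0" and bD="u 3" and bE="u 4"
       and v="u 6" and A="{u 0, u 1, u 5}" and B="{u 0, u 4, u 3}"])
    using Wf W4 Wd uset by (auto simp: hE hF hFs uinj)
  have q6: "sm W red {u 2, u 4, u 3} \<Longrightarrow> sm W red {u 3, u 5, u 1} \<Longrightarrow> ?thesis"
    apply (rule good[where W=W and SS="set vs" and bA="u 2" and bB="u 4" and bC="u 3" and bD="u 1" and bE="u 5"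
       and v="u 6" and A="{u 2, u 4, u 3}" and B="{u 3, u 5, u 1}"])
    using Wf W4 Wd uset by (auto simp: hE hF hFs uinj)
  have q7: "sm W red {u 2, u 4, u 3} \<Longrightarrow> sm W red {u 1, u 2, u 6} \<Longrightarrow> ?thesis"
    apply (rule good[where W=W and SS="set vs" and bA="u 3" and bB="u 4" and bC="u 2" and bD="u 1" and bE="u 6"
       and v="u 5" and A="{u 2, u 4, u 3}" and B="{u 1, u 2, u 6}"])
    using Wf W4 Wd uset by (auto simp: hE hF hFs uinj)
  have q8: "sm W red {u 5, u 4, u 2} \<Longrightarrow> sm W red {u 0, u 4, u 3} \<Longrightarrow> ?thesis"
    apply (rule good[where W=W and SS="set vs" and bA="u 2" and bB="u 5" and bC="u 4" and bD="u 0" and bE="u 3"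
       and v="u 6" and A="{u 5, u 4, u 2}" and B="{u 0, u 4, u 3}"])
    using Wf W4 Wd uset by (auto simp: hE hF hFs uinj)
  have q9: "sm W red {u 2, u 3, u 6} \<Longrightarrow> sm W red {u 0, u 4, u 3} \<Longrightarrow> ?thesis"
    apply (rule good[where W=W and SS="set vs" and bA="u 2" and bB="u 6" and bC="u 3" and bD="u 0" and bE="u 4"
       and v="u 5" and A="{u 2, u 3, u 6}" and B="{u 0, u 4, u 3}"])
    using Wf W4 Wd uset by (auto simp: hE hF hFs uinj)
  have q10: "sm W red {u 3, u 5, u 6} \<Longrightarrow> sm W red {u 0, u 1, u 5} \<Longrightarrow> ?thesis"
    apply (rule good[where W=W and SS="set vs" and bA="u 3" and bB="u 6" and bC="u 5" and bD="u 0" and bE="u 1"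
       and v="u 4" and A="{u 3, u 5, u 6}" and B="{u 0, u 1, u 5}"])
    using Wf W4 Wd uset by (auto simp: hE hF hFs uinj)
  have q11: "sm W red {u 5, u 4, u 2} \<Longrightarrow> sm W red {u 3, u 5, u 1} \<Longrightarrow> ?thesis"
    apply (rule good[where W=W and SS="set vs" and bA="u 2" and bB="u 4" and bC="u 5" and bD="u 1" and bE="u 3"
       and v="u 6" and A="{u 5, u 4, u 2}" and B="{u 3, u 5, u 1}"])
    using Wf W4 Wd uset by (auto simp: hE hF hFs uinj)
  have q12: "sm W red {u 3, u 5, u 6} \<Longrightarrow> sm W red {u 1, u 2, u 6} \<Longrightarrow> ?thesis"
    apply (rule good[where W=W and SS="set vs" and bA="u 3" and bB="u 5" and bC="u 6" and bD="u 1" and bE="u 2"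
       and v="u 4" and A="{u 3, u 5, u 6}" and B="{u 1, u 2, u 6}"])
    using Wf W4 Wd uset by (auto simp: hE hF hFs uinj)
  have q13: "sm W red {u 2, u 3, u 6} \<Longrightarrow> sm W red {u 3, u 5, u 1} \<Longrightarrow> ?thesis"
    apply (rule good[where W=W and SS="set vs" and bA="u 2" and bB="u 6" and bC="u 3" and bD="u 1" and bE="u 5"
       and v="u 4" and A="{u 2, u 3, u 6}" and B="{u 3, u 5, u 1}"])
    using Wf W4 Wd uset by (auto simp: hE hF hFs uinj)
  have c1: "sm W red {u 0, u 1, u 2} \<or> sm W red {u 2, u 4, u 3} \<or> sm W red {u 3, u 5, u 6}"
    by (rule chain_small[where pa=1 and pb=2 and pc=4 and pd=3 and pe=5]) (use len dist sub rp WV mx j1 jn uu Wf in \<open>auto simp: numeral_eq_Suc less_Suc_eq\<close>)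
  have c2: "sm W red {u 0, u 1, u 5} \<or> sm W red {u 5, u 4, u 2} \<or> sm W red {u 2, u 3, u 6}"
    by (rule chain_small[where pa=1 and pb=5 and pc=4 and pd=2 and pe=3]) (use len dist sub rp WV mx j1 jn uu Wf in \<open>auto simp: numeral_eq_Suc less_Suc_eq\<close>)
  have c3: "sm W red {u 0, u 4, u 3} \<or> sm W red {u 3, u 5, u 1} \<or> sm W red {u 1, u 2, u 6}"
    by (rule chain_small[where pa=4 and pb=3 and pc=5 and pd=1 and pe=2]) (use len dist sub rp WV mx j1 jn uu Wf in \<open>auto simp: numeral_eq_Suc less_Suc_eq\<close>)
  show ?thesis
    apply (insert c1 c2 c3)
    by (elim disjE; ((rule q0; assumption) | (rule q1; assumption) | (rule q2; assumption) | (rule q3; assumption) | (rule q4; assumption) | (rule q5; assumption) | (rule q6; assumption) | (rule q7; assumption) | (rule q8; assumption) | (rule q9; assumption) | (rule q10; assumption) | (rule q11; assumption) | (rule q12; assumption) | (rule q13; assumption)))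

qed

theorem lemma2p3:
  fixes V :: "'a set" and N n :: nat and red :: "'a set \<Rightarrow> bool"
    and vs :: "'a list" and W :: "'a set"
  assumes "finite V" and "card V = N" and "0 < N"
    and "1 \<le> n" and "loose_path V vs n" and "red_path red vs n"
    and "W \<subseteq> V - set vs" and "card W \<ge> 4"
    and "maximal_wrt V red vs n W"
  shows "\<forall>j. 1 \<le> j \<and> j < n \<longrightarrow>
    (\<exists>x y a1 a2 a3 a4 a5.
       x \<in> W \<and> y \<in> W \<and> x \<noteq> y \<and> distinct [a1, a2, a3, a4, a5] \<and>
       {a1, a2, a3, a4, a5} \<subseteq> lp_edge vs j \<union> lp_edge vs (j + 1) \<and>
       \<not> red {x, a1, a2, a3} \<and> \<not> red {a3, a4, a5, y} \<and>
       (\<exists>v \<in> lp_edge vs (j + 1) - lp_edge vs j. v \<notin> {a1, a2, a3, a4, a5}) \<and>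
       (\<exists>W1 W2. W1 \<subseteq> W \<and> W2 \<subseteq> W \<and> card W1 \<ge> card W - 2 \<and> card W2 \<ge> card W - 3 \<and>
          (\<forall>x' \<in> W1. \<forall>y' \<in> W2. x' \<noteq> y' \<longrightarrow>
              \<not> red (({x, a1, a2, a3} - {x}) \<union> {x'}) \<and>
              \<not> red (({a3, a4, a5, y} - {y}) \<union> {y'}))))"
proof (intro allI impI)
  fix j assume h: "1 \<le> j \<and> j < n"
  show "\<exists>x y a1 a2 a3 a4 a5.
       x \<in> W \<and> y \<in> W \<and> x \<noteq> y \<and> distinct [a1, a2, a3, a4, a5] \<and>
       {a1, a2, a3, a4, a5} \<subseteq> lp_edge vs j \<union> lp_edge vs (j + 1) \<and>
       \<not> red {x, a1, a2, a3} \<and> \<not> red {a3, a4, a5, y} \<and>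
       (\<exists>v \<in> lp_edge vs (j + 1) - lp_edge vs j. v \<notin> {a1, a2, a3, a4, a5}) \<and>
       (\<exists>W1 W2. W1 \<subseteq> W \<and> W2 \<subseteq> W \<and> card W1 \<ge> card W - 2 \<and> card W2 \<ge> card W - 3 \<and>
          (\<forall>x' \<in> W1. \<forall>y' \<in> W2. x' \<noteq> y' \<longrightarrow>
              \<not> red (({x, a1, a2, a3} - {x}) \<union> {x'}) \<and>
              \<not> red (({a3, a4, a5, y} - {y}) \<union> {y'})))"
    by (rule main_j[OF assms(1) assms(5) assms(6) assms(7) assms(8) assms(9)]) (use h in auto)
qed

end
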